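(* For every response $y$, $$\bar\pi_n(y|x)=\frac{n\,\pi_{\mathrm{gen}}(y|x)\,\phi_\beta(y|x)}{1-e^{-n}}\int_0^\infty e^{n(\Phi_\beta(s)-1)}\,e^{-s\phi_\beta(y|x)}\,ds.$$
   Context: Fix a prompt $x$, a countable response space $\mathcal{Y}$, conditional distributions $\pi_{\mathrm{target}}$ and $\pi_{\mathrm{gen}}$ (full support), a reward $r$, and $\beta>0$. Let $\phi_\beta(y|x)=\frac{\pi_{\mathrm{target}}(y|x)}{\pi_{\mathrm{gen}}(y|x)}e^{\beta r(y|x)}$ and $\Phi_\beta(s)=\mathbb{E}_{Y\sim\pi_{\mathrm{gen}}(\cdot|x)}[e^{-s\phi_\beta(Y|x)}]$ for $s\ge0$. Let $N\sim\mathrm{Poi}(n)|_{>0}$ (Poisson with mean $n$ conditioned to be positive) and, given $N$, let $Y_1,\dots,Y_N$ be i.i.d. from $\pi_{\mathrm{gen}}(\cdot|x)$; $N_y$ is the number of $j$ with $Y_j=y$ and $Z=\sum_{j=1}^N\phi_\beta(Y_j|x)$. Define $\hat\pi_N(y|x)=\mathbb{E}[N_y\phi_\beta(y|x)/Z\mid N]$ (the output distribution of sequential Monte Carlo with $N$ particles) and $\bar\pi_n(y|x)=\mathbb{E}_{N}[\hat\pi_N(y|x)]$. *)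

theory Defs
  imports "HOL-Probability.Probability"
begin

text \<open>The prompt x is fixed throughout; all conditional distributions are given
  as pmfs on the (countable) response type, implicitly conditioned on x.\<close>

definition phi :: "'y pmf \<Rightarrow> 'y pmf \<Rightarrow> ('y \<Rightarrow> real) \<Rightarrow> real \<Rightarrow> 'y \<Rightarrow> real" where
  "phi ptarget pgen r \<beta> y = pmf ptarget y / pmf pgen y * exp (\<beta> * r y)"

definition Phi :: "'y pmf \<Rightarrow> 'y pmf \<Rightarrow> ('y \<Rightarrow> real) \<Rightarrow> real \<Rightarrow> real \<Rightarrow> real" where
  "Phi ptarget pgen r \<beta> s =
     measure_pmf.expectation pgen (\<lambda>y. exp (- s * phi ptarget pgen r \<beta> y))"

text \<open>SMC output distribution with N particles:
  E[ N_y phi(y) / Z | N ] with Y_1..Y_N iid from pgen, N_y = count of y, Z = sum phi(Y_j).\<close>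
definition pihat :: "'y pmf \<Rightarrow> 'y pmf \<Rightarrow> ('y \<Rightarrow> real) \<Rightarrow> real \<Rightarrow> nat \<Rightarrow> 'y \<Rightarrow> real" where
  "pihat ptarget pgen r \<beta> N y =
     measure_pmf.expectation (replicate_pmf N pgen)
       (\<lambda>ys. real (count_list ys y) * phi ptarget pgen r \<beta> y
              / (\<Sum>j<length ys. phi ptarget pgen r \<beta> (ys ! j)))"

definition Npos :: "real \<Rightarrow> nat pmf" where
  "Npos n = cond_pmf (poisson_pmf n) {k. 0 < k}"

definition pibar :: "'y pmf \<Rightarrow> 'y pmf \<Rightarrow> ('y \<Rightarrow> real) \<Rightarrow> real \<Rightarrow> real \<Rightarrow> 'y \<Rightarrow> real" where
  "pibar ptarget pgen r \<beta> n y =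
     measure_pmf.expectation (Npos n) (\<lambda>N. pihat ptarget pgen r \<beta> N y)"

end

theory Submission
  imports Defs
begin


lemma expint:
  fixes Z :: real assumes "Z > 0"
  shows "(\<integral>\<^sup>+s. ennreal (indicator {0..} s * exp (- s * Z)) \<partial>lborel) = ennreal (1 / Z)"
proof -
  have "((\<lambda>x::real. exp (-Z*x)) has_integral exp (-Z*0)/Z) {0..}"
    by (rule has_integral_exp_minus_to_infinity) (use assms in auto)
  then have "((\<lambda>x::real. if x \<in> {0..} then exp (-Z*x) else 0) has_integral 1/Z) UNIV"
    using has_integral_restrict_UNIV[of "{0..}" "\<lambda>x. exp (-Z*x)" "1/Z"] by simp
  then have h: "((\<lambda>s. indicator {0..} s * exp (- s * Z)) has_integral 1/Z) UNIV"
    by (rule has_integral_eq_rhs[OF has_integral_cong[THEN iffD1], rotated]) (auto simp: indicator_def mult.commute)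
  show ?thesis
    by (rule nn_integral_has_integral_lborel[OF _ _ h]) auto
qed

lemma sum_nth_list: "(\<Sum>j<length ys. (f::'a\<Rightarrow>real) (ys ! j)) = sum_list (map f ys)"
  by (simp add: sum_list_sum_nth atLeast0LessThan)

lemma count_le_sum:
  assumes "\<And>x. (f::'a\<Rightarrow>real) x \<ge> 0"
  shows "real (count_list ys y) * f y \<le> sum_list (map f ys)"
  using assms by (induction ys) (auto simp: algebra_simps add_increasing)

lemma sum_pos:
  assumes "\<And>x. (f::'a\<Rightarrow>real) x > 0" "ys \<noteq> []"
  shows "sum_list (map f ys) > 0"
using assms(2) proof (induction ys)
  case (Cons a ys)
  have "sum_list (map f ys) \<ge> 0" using assms(1) by (induction ys) (auto intro: add_nonneg_nonneg less_imp_le)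
  then show ?case using assms(1)[of a] by simp
qed simp

lemma ennreal_exp_mult: "ennreal (exp (- s * (a + b))) = ennreal (exp (- s * a)) * ennreal (exp (- s * b))"
proof -
  have "exp (- s * (a + b)) = exp (- s * a) * exp (- s * b)" by (simp add: exp_add[symmetric] algebra_simps)
  then show ?thesis by (simp add: ennreal_mult)
qed

lemma ennreal_exp_minus: "ennreal (exp (- a - b)) = ennreal (exp (- a)) * ennreal (exp (- b))"
  by (simp add: ennreal_mult[symmetric] exp_add[symmetric])

lemma B1:
  "(\<integral>\<^sup>+ys. ennreal (exp (- s * sum_list (map f ys))) \<partial>replicate_pmf N p)
    = (\<integral>\<^sup>+x. ennreal (exp (- s * f x)) \<partial>p) ^ N"
proof (induction N)
  case 0 then show ?case by simp
next
  case (Suc N)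
  have "(\<integral>\<^sup>+ys. ennreal (exp (- s * sum_list (map f ys))) \<partial>replicate_pmf (Suc N) p)
     = (\<integral>\<^sup>+x. \<integral>\<^sup>+xs. ennreal (exp (- s * f x)) * ennreal (exp (- s * sum_list (map f xs))) \<partial>replicate_pmf N p \<partial>p)"
    by (simp only: replicate_pmf.simps nn_integral_bind_pmf nn_integral_return_pmf ennreal_exp_mult list.map sum_list.Cons zero_le)
  also have "\<dots> = (\<integral>\<^sup>+x. ennreal (exp (- s * f x)) * (\<integral>\<^sup>+x. ennreal (exp (- s * f x)) \<partial>p) ^ N \<partial>p)"
    using Suc by (simp add: nn_integral_cmult)
  also have "\<dots> = (\<integral>\<^sup>+x. ennreal (exp (- s * f x)) \<partial>p) ^ Suc N"
    by (simp add: nn_integral_multc mult.commute)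
  finally show ?case .
qed

lemma B2:
  "(\<integral>\<^sup>+ys. ennreal (real (count_list ys y) * exp (- s * sum_list (map f ys))) \<partial>replicate_pmf N p)
    = of_nat N * ennreal (pmf p y * exp (- s * f y)) * (\<integral>\<^sup>+x. ennreal (exp (- s * f x)) \<partial>p) ^ (N - 1)"
proof (induction N)
  case 0 then show ?case by simp
next
  case (Suc N)
  define E where "E = (\<integral>\<^sup>+x. ennreal (exp (- s * f x)) \<partial>p)"
  define a where "a = ennreal (pmf p y * exp (- s * f y))"
  have "(\<integral>\<^sup>+ys. ennreal (real (count_list ys y) * exp (- s * sum_list (map f ys))) \<partial>replicate_pmf (Suc N) p)
     = (\<integral>\<^sup>+x. \<integral>\<^sup>+xs. ennreal (exp (- s * f x)) * (ennreal (indicator {y} x) * ennreal (exp (- s * sum_list (map f xs))) + ennreal (real (count_list xs y) * exp (- s * sum_list (map f xs)))) \<partial>replicate_pmf N p \<partial>p)"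
    apply (simp only: replicate_pmf.simps nn_integral_bind_pmf nn_integral_return_pmf zero_le)
    apply (intro nn_integral_cong)
    apply (simp add: indicator_def ennreal_exp_mult ennreal_mult' distrib_left distrib_right flip: ennreal_plus)
    apply (simp add: ennreal_mult' ennreal_exp_minus algebra_simps)
    done
  also have "\<dots> = (\<integral>\<^sup>+x. ennreal (exp (- s * f x)) * (ennreal (indicator {y} x) * E ^ N + of_nat N * a * E ^ (N - 1)) \<partial>p)"
    apply (intro nn_integral_cong)
    using Suc B1[where N=N and s=s and f=f and p=p] apply (simp add: nn_integral_cmult nn_integral_add E_def a_def)
    done
  also have "\<dots> = (\<integral>\<^sup>+x. ennreal (exp (- s * f y)) * E ^ N * indicator {y} x + (of_nat N * a * E ^ (N - 1)) * ennreal (exp (- s * f x)) \<partial>p)"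
    by (intro nn_integral_cong) (auto simp: indicator_def algebra_simps)
  also have "\<dots> = ennreal (exp (- s * f y)) * E ^ N * pmf p y + (of_nat N * a * E ^ (N - 1)) * E"
    by (simp add: nn_integral_add nn_integral_cmult E_def emeasure_pmf_single)
  also have "\<dots> = of_nat (Suc N) * a * E ^ N"
    by (cases N) (auto simp: a_def ennreal_mult' algebra_simps power_Suc)
  finally show ?case by (simp add: E_def a_def)
qed

lemma E_fin:
  fixes p :: "'a pmf" and \<phi> :: "'a \<Rightarrow> real" and s :: real
  assumes "\<And>x. \<phi> x > 0" "s \<ge> 0"
  shows "(\<integral>\<^sup>+x. ennreal (exp (- s * \<phi> x)) \<partial>p) = ennreal (measure_pmf.expectation p (\<lambda>x. exp (- s * \<phi> x)))"
proof -
  have le: "(\<integral>\<^sup>+x. ennreal (exp (- s * \<phi> x)) \<partial>p) \<le> (\<integral>\<^sup>+x. 1 \<partial>p)"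
    apply (intro nn_integral_mono)
    using assms by (simp add: less_imp_le mult_nonneg_nonneg)
  then have "(\<integral>\<^sup>+x. ennreal (exp (- s * \<phi> x)) \<partial>p) \<noteq> top"
    by (auto simp: top_unique)
  moreover have "measure_pmf.expectation p (\<lambda>x. exp (- s * \<phi> x)) = enn2real (\<integral>\<^sup>+x. ennreal (exp (- s * \<phi> x)) \<partial>p)"
    by (rule integral_eq_nn_integral) auto
  ultimately show ?thesis by (simp add: less_top)
qed

lemma expect_nonneg_le1:
  fixes p :: "'a pmf" and \<phi> :: "'a \<Rightarrow> real" and s :: real
  assumes "\<And>x. \<phi> x > 0" "s \<ge> 0"
  shows "measure_pmf.expectation p (\<lambda>x. exp (- s * \<phi> x)) \<ge> 0"
  by simp

lemma pihat_nn:
  fixes p :: "'a::countable pmf"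
  assumes pos: "\<And>x. \<phi> x > 0"
  shows "ennreal (measure_pmf.expectation (replicate_pmf N p) (\<lambda>ys. real (count_list ys y) * \<phi> y / (\<Sum>j<length ys. \<phi> (ys ! j))))
   = (\<integral>\<^sup>+ s. ennreal (indicator {0..} s * (real N * pmf p y * \<phi> y *
        measure_pmf.expectation p (\<lambda>x. exp (- s * \<phi> x)) ^ (N - 1) * exp (- s * \<phi> y))) \<partial>lborel)"
proof -
  define R where "R = replicate_pmf N p"
  define f where "f = (\<lambda>ys. real (count_list ys y) * \<phi> y / sum_list (map \<phi> ys))"
  have nn: "0 \<le> \<phi> x" for x using pos[of x] by simp
  have f_nn: "0 \<le> f ys" for ys
  proof -
    have "0 \<le> sum_list (map \<phi> ys)" using nn by (induction ys) (auto intro: add_nonneg_nonneg)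
    then show ?thesis unfolding f_def using nn by simp
  qed
  have f_le: "f ys \<le> 1" for ys
  proof (cases "ys = []")
    case False
    have "sum_list (map \<phi> ys) > 0" using sum_pos[OF pos False] .
    moreover have "real (count_list ys y) * \<phi> y \<le> sum_list (map \<phi> ys)" using count_le_sum[of \<phi> ys y, OF nn] .
    ultimately show ?thesis unfolding f_def by (simp only: divide_le_eq_1_pos)
  qed (simp add: f_def)
  have fin: "(\<integral>\<^sup>+ys. ennreal (f ys) \<partial>R) \<noteq> top"
  proof -
    have "(\<integral>\<^sup>+ys. ennreal (f ys) \<partial>R) \<le> (\<integral>\<^sup>+ys. 1 \<partial>R)"
      by (intro nn_integral_mono) (simp add: f_le)
    then show ?thesis by (auto simp: top_unique)
  qed
  have "measure_pmf.expectation R f = enn2real (\<integral>\<^sup>+ys. ennreal (f ys) \<partial>R)"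
    by (rule integral_eq_nn_integral) (auto simp: f_nn)
  then have L: "ennreal (measure_pmf.expectation R f) = (\<integral>\<^sup>+ys. ennreal (f ys) \<partial>R)"
    using fin by (simp add: less_top)
  define F where "F = (\<lambda>ys s. ennreal (indicator {0..} s * (real (count_list ys y) * \<phi> y * exp (- s * sum_list (map \<phi> ys)))))"
  have F_meas[measurable]: "F ys \<in> borel_measurable lborel" for ys
    unfolding F_def by measurable
  have pt: "ennreal (f ys) = (\<integral>\<^sup>+ s. F ys s \<partial>lborel)" for ys
  proof (cases "ys = []")
    case True then show ?thesis by (simp add: f_def F_def)
  next
    case False
    define Z where "Z = sum_list (map \<phi> ys)"
    have Z: "Z > 0" using sum_pos[OF pos False] by (simp add: Z_def)
    have "ennreal (f ys) = ennreal (real (count_list ys y) * \<phi> y) * ennreal (1 / Z)"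
      unfolding f_def Z_def[symmetric] using nn Z by (simp add: ennreal_mult[symmetric])
    also have "\<dots> = ennreal (real (count_list ys y) * \<phi> y) * (\<integral>\<^sup>+s. ennreal (indicator {0..} s * exp (- s * Z)) \<partial>lborel)"
      using expint[OF Z] by simp
    also have "\<dots> = (\<integral>\<^sup>+s. ennreal (real (count_list ys y) * \<phi> y) * ennreal (indicator {0..} s * exp (- s * Z)) \<partial>lborel)"
      by (rule nn_integral_cmult[symmetric]) measurable
    also have "\<dots> = (\<integral>\<^sup>+ s. F ys s \<partial>lborel)"
      unfolding F_def Z_def using nn
      by (intro nn_integral_cong) (simp add: ennreal_mult' mult_ac)
    finally show ?thesis .
  qed
  interpret pair_sigma_finite "measure_pmf R" lborel
    by (simp add: pair_sigma_finite_def measure_pmf.sigma_finite_measure_axioms lborel.sigma_finite_measure_axioms)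
  have joint: "case_prod F \<in> borel_measurable (measure_pmf R \<Otimes>\<^sub>M lborel)"
  proof -
    have "case_prod F \<in> borel_measurable (count_space UNIV \<Otimes>\<^sub>M lborel)"
      by (rule measurable_pair_measure_countable1) simp_all
    moreover have eq: "sets (measure_pmf R \<Otimes>\<^sub>M lborel) = sets (count_space UNIV \<Otimes>\<^sub>M lborel)"
      by (rule sets_pair_measure_cong) (simp_all add: sets_measure_pmf_count_space)
    ultimately show ?thesis
      using measurable_cong_sets[OF eq refl] by simp
  qed
  have "(\<integral>\<^sup>+ys. ennreal (f ys) \<partial>R) = (\<integral>\<^sup>+ys. \<integral>\<^sup>+ s. F ys s \<partial>lborel \<partial>R)"
    by (simp add: pt)
  also have "\<dots> = (\<integral>\<^sup>+ s. \<integral>\<^sup>+ys. F ys s \<partial>R \<partial>lborel)"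
    by (rule Fubini'[OF joint, symmetric])
  also have "\<dots> = (\<integral>\<^sup>+ s. ennreal (indicator {0..} s * (real N * pmf p y * \<phi> y *
        measure_pmf.expectation p (\<lambda>x. exp (- s * \<phi> x)) ^ (N - 1) * exp (- s * \<phi> y))) \<partial>lborel)"
  proof (intro nn_integral_cong)
    fix s :: real
    show "(\<integral>\<^sup>+ys. F ys s \<partial>R) = ennreal (indicator {0..} s * (real N * pmf p y * \<phi> y *
        measure_pmf.expectation p (\<lambda>x. exp (- s * \<phi> x)) ^ (N - 1) * exp (- s * \<phi> y)))"
    proof (cases "s \<ge> 0")
      case False then show ?thesis by (simp add: F_def)
    next
      case True
      have "(\<integral>\<^sup>+ys. F ys s \<partial>R) = (\<integral>\<^sup>+ys. ennreal (\<phi> y) * ennreal (real (count_list ys y) * exp (- s * sum_list (map \<phi> ys))) \<partial>R)"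
        unfolding F_def using True nn by (intro nn_integral_cong) (simp add: ennreal_mult' mult_ac)
      also have "\<dots> = ennreal (\<phi> y) * (of_nat N * ennreal (pmf p y * exp (- s * \<phi> y)) * (\<integral>\<^sup>+x. ennreal (exp (- s * \<phi> x)) \<partial>p) ^ (N - 1))"
        using B2[where N=N and s=s and f=\<phi> and p=p and y=y] by (subst nn_integral_cmult) (simp_all add: R_def)
      also have "\<dots> = ennreal (indicator {0..} s * (real N * pmf p y * \<phi> y *
        measure_pmf.expectation p (\<lambda>x. exp (- s * \<phi> x)) ^ (N - 1) * exp (- s * \<phi> y)))"
        unfolding E_fin[OF pos True] ennreal_power[OF expect_nonneg_le1[OF pos True], symmetric]
        using True nn expect_nonneg_le1[OF pos True, of p]
        by (simp add: ennreal_mult' ennreal_power ennreal_of_nat_eq_real_of_nat[symmetric] mult_ac)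
      finally show ?thesis .
    qed
  qed
  finally show ?thesis using L by (simp add: R_def f_def sum_nth_list)
qed



lemma Npos_pmf:
  assumes "n > 0"
  shows "pmf (Npos n) N = (if 0 < N then n ^ N / fact N * exp (-n) / (1 - exp (-n)) else 0)"
proof -
  have ne: "set_pmf (poisson_pmf n) \<inter> {k. 0 < k} \<noteq> {}" using assms by auto
  have "measure (measure_pmf (poisson_pmf n)) {k. 0 < k} = measure (measure_pmf (poisson_pmf n)) (space (measure_pmf (poisson_pmf n)) - {0})"
    by (intro arg_cong[where f="measure _"]) auto
  also have "\<dots> = 1 - exp (-n)"
    by (subst measure_pmf.prob_compl) (auto simp: measure_pmf_single pmf_poisson[OF assms])
  finally show ?thesis
    unfolding Npos_def by (simp add: pmf_cond[OF ne] pmf_poisson[OF assms])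
qed

lemma pois_series:
  assumes "n > 0"
  shows "(\<lambda>N. pmf (Npos n) N * (real N * A * F ^ (N - 1))) sums (n * A / (1 - exp (-n)) * exp (n * (F - 1)))"
proof -
  define D where "D = 1 - exp (-n)"
  define C where "C = n * A * exp (-n) / D"
  have e: "(\<lambda>m. C * ((n * F) ^ m / fact m)) sums (C * exp (n * F))"
    by (rule sums_mult) (use exp_converges[of "n * F"] in \<open>simp add: divide_inverse mult.commute\<close>)
  have "(\<lambda>m. pmf (Npos n) (Suc m) * (real (Suc m) * A * F ^ (Suc m - 1))) = (\<lambda>m. C * ((n * F) ^ m / fact m))"
  proof
    fix m
    have "fact (Suc m) = (real (Suc m)) * fact m" by simp
    moreover have "D \<noteq> 0" unfolding D_def using assms by simp
    moreover have "fact m \<noteq> (0::real)" by simp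
    ultimately show "pmf (Npos n) (Suc m) * (real (Suc m) * A * F ^ (Suc m - 1)) = C * ((n * F) ^ m / fact m)"
      unfolding Npos_pmf[OF assms] C_def D_def[symmetric]
      by (simp add: power_mult_distrib field_simps del: fact_Suc of_nat_Suc)
  qed
  with e have "(\<lambda>m. pmf (Npos n) (Suc m) * (real (Suc m) * A * F ^ (Suc m - 1))) sums (C * exp (n * F))"
    by simp
  then have "(\<lambda>N. pmf (Npos n) N * (real N * A * F ^ (N - 1))) sums (C * exp (n * F) + 0)"
    by (subst (asm) sums_Suc_iff) simp
  moreover have "C * exp (n * F) = n * A / (1 - exp (-n)) * exp (n * (F - 1))"
    unfolding C_def D_def by (simp add: exp_add[symmetric] algebra_simps)
  ultimately show ?thesis by simp
qed

lemma Phi_meas: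
  fixes pgen :: "'y::countable pmf"
  shows "(\<lambda>s. Phi ptarget pgen r \<beta> s) \<in> borel_measurable lborel"
  unfolding Phi_def
  by (rule measure_pmf.borel_measurable_lebesgue_integral) measurable


theorem lemmaD1:
  fixes ptarget pgen :: "'y::countable pmf" and r :: "'y \<Rightarrow> real"
    and \<beta> n :: real and y :: 'y
  assumes "set_pmf ptarget = UNIV" and "set_pmf pgen = UNIV"
    and "\<beta> > 0" and "n > 0"
  shows "pibar ptarget pgen r \<beta> n y =
    n * pmf pgen y * phi ptarget pgen r \<beta> y / (1 - exp (- n)) *
    (LBINT s:{0..}. exp (n * (Phi ptarget pgen r \<beta> s - 1)) * exp (- s * phi ptarget pgen r \<beta> y))"
proof -
  define \<phi> where "\<phi> = phi ptarget pgen r \<beta>"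
  define c where "c = \<phi> y"
  define P where "P = pmf pgen y"
  define \<Phi> where "\<Phi> = Phi ptarget pgen r \<beta>"
  define K where "K = n * P * c / (1 - exp (- n))"
  define H where "H = (\<lambda>s. exp (n * (\<Phi> s - 1)) * exp (- s * c))"
  have pos: "\<phi> x > 0" for x
  proof -
    have "pmf ptarget x \<noteq> 0" "pmf pgen x \<noteq> 0" using assms(1,2) by (auto simp: set_pmf_iff[symmetric])
    then have "pmf ptarget x > 0" "pmf pgen x > 0" by (auto simp: less_le pmf_nonneg)
    then show ?thesis unfolding \<phi>_def phi_def by simp
  qed
  have nn: "0 \<le> \<phi> x" for x using pos[of x] by simp
  have PhiE: "\<Phi> s = measure_pmf.expectation pgen (\<lambda>x. exp (- s * \<phi> x))" for s
    by (simp add: \<Phi>_def Phi_def \<phi>_def)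
  have Phi_m[measurable]: "\<Phi> \<in> borel_measurable lborel"
    unfolding \<Phi>_def using Phi_meas[of ptarget pgen r \<beta>] by simp
  define G where "G = (\<lambda>N s. ennreal (indicator {0..} s * (real N * P * c * \<Phi> s ^ (N - 1) * exp (- s * c))))"
  have G_m[measurable]: "G N \<in> borel_measurable lborel" for N
    unfolding G_def by measurable
  have pihat_eq: "ennreal (pihat ptarget pgen r \<beta> N y) = integral\<^sup>N lborel (G N)" for N
    using pihat_nn[OF pos, of N pgen y]
    unfolding pihat_def G_def PhiE c_def P_def \<phi>_def by simp
  have pihat_nonneg: "pihat ptarget pgen r \<beta> N y \<ge> 0" for N
    unfolding pihat_def \<phi>_def[symmetric]
    using nn by (intro Bochner_Integration.integral_nonneg divide_nonneg_nonneg mult_nonneg_nonneg sum_nonneg) auto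
  have Kn: "K \<ge> 0" unfolding K_def P_def c_def using nn assms(4) by simp
  have "pibar ptarget pgen r \<beta> n y = enn2real (\<integral>\<^sup>+N. ennreal (pihat ptarget pgen r \<beta> N y) \<partial>Npos n)"
    unfolding pibar_def by (rule integral_eq_nn_integral) (auto simp: pihat_nonneg)
  also have "(\<integral>\<^sup>+N. ennreal (pihat ptarget pgen r \<beta> N y) \<partial>Npos n) = (\<Sum>N. ennreal (pmf (Npos n) N) * integral\<^sup>N lborel (G N))"
    by (simp add: nn_integral_measure_pmf nn_integral_count_space_nat pihat_eq)
  also have "\<dots> = (\<Sum>N. \<integral>\<^sup>+s. ennreal (pmf (Npos n) N) * G N s \<partial>lborel)"
    by (simp add: nn_integral_cmult)
  also have "\<dots> = (\<integral>\<^sup>+s. (\<Sum>N. ennreal (pmf (Npos n) N) * G N s) \<partial>lborel)"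
    by (rule nn_integral_suminf[symmetric]) measurable
  also have "\<dots> = (\<integral>\<^sup>+s. ennreal (indicator {0..} s * (K * H s)) \<partial>lborel)"
  proof (intro nn_integral_cong)
    fix s :: real
    show "(\<Sum>N. ennreal (pmf (Npos n) N) * G N s) = ennreal (indicator {0..} s * (K * H s))"
    proof (cases "s \<ge> 0")
      case False then show ?thesis by (simp add: G_def)
    next
      case True
      have Phin: "\<Phi> s \<ge> 0" unfolding PhiE using expect_nonneg_le1[OF pos True] .
      define A where "A = P * c * exp (- s * c)"
      have An: "A \<ge> 0" unfolding A_def P_def c_def using nn by simp
      have S: "(\<lambda>N. pmf (Npos n) N * (real N * A * \<Phi> s ^ (N - 1))) sums (n * A / (1 - exp (-n)) * exp (n * (\<Phi> s - 1)))"
        by (rule pois_series[OF assms(4)])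
      have "(\<Sum>N. ennreal (pmf (Npos n) N) * G N s) = (\<Sum>N. ennreal (pmf (Npos n) N * (real N * A * \<Phi> s ^ (N - 1))))"
        using True Phin An unfolding G_def A_def
      proof (intro suminf_cong)
        fix N
        have "P \<ge> 0" "c \<ge> 0" unfolding P_def c_def using nn by auto
        then show "ennreal (pmf (Npos n) N) * ennreal (indicator {0..} s * (real N * P * c * \<Phi> s ^ (N - 1) * exp (- s * c))) =
          ennreal (pmf (Npos n) N * (real N * (P * c * exp (- s * c)) * \<Phi> s ^ (N - 1)))"
          using True Phin by (simp add: ennreal_mult[symmetric] mult_ac)
      qed
      also have "\<dots> = ennreal (\<Sum>N. pmf (Npos n) N * (real N * A * \<Phi> s ^ (N - 1)))"
        by (rule suminf_ennreal2) (use Phin An S in \<open>auto simp: sums_summable\<close>)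
      also have "\<dots> = ennreal (indicator {0..} s * (K * H s))"
        using S True unfolding K_def H_def A_def by (simp add: sums_iff exp_add[symmetric] algebra_simps)
      finally show ?thesis .
    qed
  qed
  finally have L: "pibar ptarget pgen r \<beta> n y = enn2real (\<integral>\<^sup>+s. ennreal (indicator {0..} s * (K * H s)) \<partial>lborel)" .
  have "integral\<^sup>L lborel (\<lambda>s. indicator {0..} s * (K * H s)) = enn2real (\<integral>\<^sup>+s. ennreal (indicator {0..} s * (K * H s)) \<partial>lborel)"
    by (rule integral_eq_nn_integral) (unfold H_def, measurable, use Kn in \<open>auto\<close>)
  moreover have "integral\<^sup>L lborel (\<lambda>s. indicator {0..} s * (K * H s)) = K * (LBINT s:{0..}. H s)"
  proof -
    have "(\<lambda>s. indicator {0..} s * (K * H s)) = (\<lambda>s. K * (indicator {0..} s *\<^sub>R H s))"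
      by (auto simp: fun_eq_iff)
    then show ?thesis
      unfolding set_lebesgue_integral_def by (simp only: integral_mult_right_zero)
  qed
  ultimately show ?thesis
    using L unfolding K_def H_def \<Phi>_def c_def P_def \<phi>_def by simp
qed

end
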